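(* Let $\mathcal A$ be a $p$-S-ring over a finite $p$-group $H$, let $K\le H$ be an $\mathcal A$-subgroup of index $p$, and let $T\in\mathrm{Bs}(\mathcal A)$. Then: (i) $T$ is contained in a single coset of $K$; in particular $\mathrm{rad}(T)\le K$. (ii) If $L\le H$ is an $\mathcal A$-subgroup of order $p$ with $L\trianglelefteq H$ and $L\not\le\mathrm{rad}(T)$, then $hL\cap T=Lh\cap T=\{h\}$ for every $h\in T$. (iii) If $H$ is abelian and $|O(\mathcal A)\cap K|\cdot|T|>|H|/p$, then $O(\mathcal A)\cap\mathrm{rad}(T)\ne\{1\}$.
   Context: An S-ring over $H$ is a subalgebra $\mathcal A\subseteq\mathbb{Q}H$ spanned by $\underline{T}=\sum_{t\in T}t$ for $T$ in a partition $\mathrm{Bs}(\mathcal A)$ of $H$ (basic sets) with $\{1\}\in\mathrm{Bs}(\mathcal A)$ and $T^{-1}\in\mathrm{Bs}(\mathcal A)$ for all $T$. A subgroup $K$ is an $\mathcal A$-subgroup if $\underline K\in\mathcal A$. $\mathrm{rad}(S)=\{h\in H:hS=Sh=S\}$. The thin radical is $O(\mathcal A)=\{h\in H:\{h\}\in\mathrm{Bs}(\mathcal A)\}$. $\mathcal A$ is a $p$-S-ring if $H$ is a $p$-group and every basic set has $p$-power size. *)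

theory Defs
  imports "HOL-Algebra.Algebra"
begin

text \<open>Elements of the group algebra QH are modelled as functions from the group
  elements to rat, vanishing outside the carrier.  The basic sets are given by
  the partition S; the S-ring is the rational span of the characteristic
  functions of the basic sets.\<close>

definition ind :: "'a set \<Rightarrow> 'a \<Rightarrow> rat" where
  "ind T x = (if x \<in> T then 1 else 0)"

definition conv :: "('a, 'b) monoid_scheme \<Rightarrow> ('a \<Rightarrow> rat) \<Rightarrow> ('a \<Rightarrow> rat) \<Rightarrow> 'a \<Rightarrow> rat" where
  "conv H f g = (\<lambda>x. if x \<in> carrier H
      then (\<Sum>y\<in>carrier H. f y * g (inv\<^bsub>H\<^esub> y \<otimes>\<^bsub>H\<^esub> x)) else 0)"

definition in_span :: "'a set set \<Rightarrow> ('a \<Rightarrow> rat) \<Rightarrow> bool" where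
  "in_span S f \<longleftrightarrow> (\<exists>c :: 'a set \<Rightarrow> rat. f = (\<lambda>x. \<Sum>T\<in>S. c T * ind T x))"

definition S_ring :: "('a, 'b) monoid_scheme \<Rightarrow> 'a set set \<Rightarrow> bool" where
  "S_ring H S \<longleftrightarrow>
     group H \<and> finite (carrier H) \<and>
     (\<forall>T\<in>S. T \<noteq> {} \<and> T \<subseteq> carrier H) \<and>
     \<Union>S = carrier H \<and>
     (\<forall>T1\<in>S. \<forall>T2\<in>S. T1 \<noteq> T2 \<longrightarrow> T1 \<inter> T2 = {}) \<and>
     {\<one>\<^bsub>H\<^esub>} \<in> S \<and>
     (\<forall>T\<in>S. (\<lambda>x. inv\<^bsub>H\<^esub> x) ` T \<in> S) \<and>
     (\<forall>T1\<in>S. \<forall>T2\<in>S. in_span S (conv H (ind T1) (ind T2)))"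

definition A_subgroup :: "('a, 'b) monoid_scheme \<Rightarrow> 'a set set \<Rightarrow> 'a set \<Rightarrow> bool" where
  "A_subgroup H S K \<longleftrightarrow> subgroup K H \<and> in_span S (ind K)"

definition rad :: "('a, 'b) monoid_scheme \<Rightarrow> 'a set \<Rightarrow> 'a set" where
  "rad H T = {h \<in> carrier H. h <#\<^bsub>H\<^esub> T = T \<and> T #>\<^bsub>H\<^esub> h = T}"

definition thin_radical :: "('a, 'b) monoid_scheme \<Rightarrow> 'a set set \<Rightarrow> 'a set" where
  "thin_radical H S = {h \<in> carrier H. {h} \<in> S}"

definition p_S_ring :: "('a, 'b) monoid_scheme \<Rightarrow> 'a set set \<Rightarrow> nat \<Rightarrow> bool" where
  "p_S_ring H S p \<longleftrightarrow> S_ring H S \<and> Factorial_Ring.prime p \<and>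
     (\<exists>n. card (carrier H) = p ^ n) \<and> (\<forall>T\<in>S. \<exists>k. card T = p ^ k)"

end

theory Submission
  imports Defs
begin

lemma span_const:
  assumes "S_ring H S" "in_span S f" "T \<in> S" "x \<in> T" "y \<in> T"
  shows "f x = f y"
proof -
  obtain c where c: "f = (\<lambda>x. \<Sum>T\<in>S. c T * ind T x)" using assms(2) unfolding in_span_def by blast
  have disj: "\<forall>T1\<in>S. \<forall>T2\<in>S. T1 \<noteq> T2 \<longrightarrow> T1 \<inter> T2 = {}" using assms(1) unfolding S_ring_def by blast
  have "\<And>T'. T' \<in> S \<Longrightarrow> ind T' x = ind T' y"
  proof -
    fix T' assume "T' \<in> S"
    show "ind T' x = ind T' y"
    proof (cases "T' = T")
      case True then show ?thesis using assms(4,5) by (simp add: ind_def)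
    next
      case False then have "T' \<inter> T = {}" using disj \<open>T' \<in> S\<close> assms(3) by blast
      then show ?thesis using assms(4,5) by (auto simp add: ind_def)
    qed
  qed
  then show ?thesis unfolding c by (auto intro: sum.cong)
qed

lemma conv_card:
  assumes "group H" "finite (carrier H)" "A \<subseteq> carrier H" "B \<subseteq> carrier H" "x \<in> carrier H"
  shows "conv H (ind A) (ind B) x = of_nat (card {y\<in>A. inv\<^bsub>H\<^esub> y \<otimes>\<^bsub>H\<^esub> x \<in> B})"
proof -
  have "conv H (ind A) (ind B) x = (\<Sum>y\<in>carrier H. if y \<in> A \<and> inv\<^bsub>H\<^esub> y \<otimes>\<^bsub>H\<^esub> x \<in> B then 1 else 0)"
    using assms(5) unfolding conv_def ind_def by (auto intro: sum.cong)
  also have "\<dots> = (\<Sum>y\<in>{y\<in>carrier H. y \<in> A \<and> inv\<^bsub>H\<^esub> y \<otimes>\<^bsub>H\<^esub> x \<in> B}. 1)"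
    using assms(2) by (subst sum.inter_filter[symmetric]) simp_all
  also have "{y\<in>carrier H. y \<in> A \<and> inv\<^bsub>H\<^esub> y \<otimes>\<^bsub>H\<^esub> x \<in> B} = {y\<in>A. inv\<^bsub>H\<^esub> y \<otimes>\<^bsub>H\<^esub> x \<in> B}"
    using assms(3) by auto
  finally show ?thesis by simp
qed

lemma card_rcos_count:
  fixes H (structure)
  assumes "group H" "subgroup K H" "T \<subseteq> carrier H" "x \<in> carrier H"
  shows "card {y\<in>K. inv\<^bsub>H\<^esub> y \<otimes>\<^bsub>H\<^esub> x \<in> T} = card (T \<inter> (K #>\<^bsub>H\<^esub> x))"
proof -
  interpret group H by fact
  have sub: "K \<subseteq> carrier H" using assms(2) subgroup.subset by blast
  have "bij_betw (\<lambda>y. inv y \<otimes> x) {y\<in>K. inv y \<otimes> x \<in> T} (T \<inter> (K #> x))"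
  proof (rule bij_betwI')
    fix a b assume "a \<in> {y\<in>K. inv y \<otimes> x \<in> T}" "b \<in> {y\<in>K. inv y \<otimes> x \<in> T}"
    then have ab: "a \<in> carrier H" "b \<in> carrier H" using sub by auto
    have "(inv a \<otimes> x = inv b \<otimes> x) = (inv a = inv b)" using ab assms(4) by (simp add: r_cancel)
    also have "\<dots> = (a = b)" using ab by (metis inv_inv)
    finally show "(inv a \<otimes> x = inv b \<otimes> x) = (a = b)" .
  next
    fix a assume a: "a \<in> {y\<in>K. inv y \<otimes> x \<in> T}"
    then have "inv a \<in> K" using assms(2) subgroup.m_inv_closed by fastforce
    then show "inv a \<otimes> x \<in> T \<inter> (K #> x)" using a unfolding r_coset_def by auto
  next
    fix z assume "z \<in> T \<inter> (K #> x)"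
    then obtain k where k: "k \<in> K" "z = k \<otimes> x" "z \<in> T" unfolding r_coset_def by auto
    then have "inv k \<in> K" using assms(2) subgroup.m_inv_closed by fastforce
    moreover have "inv (inv k) \<otimes> x = z" using k sub by auto
    ultimately show "\<exists>y\<in>{y\<in>K. inv y \<otimes> x \<in> T}. z = inv y \<otimes> x" using k by auto
  qed
  then show ?thesis by (rule bij_betw_same_card)
qed

lemma conv_sum_left:
  assumes "finite I"
  shows "conv H (\<lambda>x. \<Sum>i\<in>I. c i * f i x) g = (\<lambda>x. \<Sum>i\<in>I. c i * conv H (f i) g x)"
proof
  fix x
  show "conv H (\<lambda>x. \<Sum>i\<in>I. c i * f i x) g x = (\<Sum>i\<in>I. c i * conv H (f i) g x)"
  proof (cases "x \<in> carrier H")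
    case True
    have "conv H (\<lambda>x. \<Sum>i\<in>I. c i * f i x) g x
        = (\<Sum>y\<in>carrier H. \<Sum>i\<in>I. c i * f i y * g (inv\<^bsub>H\<^esub> y \<otimes>\<^bsub>H\<^esub> x))"
      using True unfolding conv_def by (simp add: sum_distrib_right)
    also have "\<dots> = (\<Sum>i\<in>I. \<Sum>y\<in>carrier H. c i * f i y * g (inv\<^bsub>H\<^esub> y \<otimes>\<^bsub>H\<^esub> x))"
      by (rule sum.swap)
    also have "\<dots> = (\<Sum>i\<in>I. c i * conv H (f i) g x)"
      using True unfolding conv_def by (simp add: sum_distrib_left mult.assoc)
    finally show ?thesis .
  next
    case False then show ?thesis unfolding conv_def by simp
  qed
qed

lemma span_lincomb:
  assumes "finite S" "finite I" "\<forall>i\<in>I. in_span S (f i)"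
  shows "in_span S (\<lambda>x. \<Sum>i\<in>I. c i * f i x)"
proof -
  have "\<forall>i\<in>I. \<exists>d. f i = (\<lambda>x. \<Sum>T\<in>S. d T * ind T x)" using assms(3) unfolding in_span_def by blast
  then obtain d where d: "\<forall>i\<in>I. f i = (\<lambda>x. \<Sum>T\<in>S. d i T * ind T x)" by metis
  have "(\<lambda>x. \<Sum>i\<in>I. c i * f i x) = (\<lambda>x. \<Sum>i\<in>I. c i * (\<Sum>T\<in>S. d i T * ind T x))"
    using d by (auto intro!: sum.cong)
  also have "\<dots> = (\<lambda>x. \<Sum>T\<in>S. (\<Sum>i\<in>I. c i * d i T) * ind T x)"
    by (auto simp: sum_distrib_left sum_distrib_right mult.assoc intro: sum.swap)
  finally show ?thesis unfolding in_span_def by (rule exI[where x="\<lambda>T. \<Sum>i\<in>I. c i * d i T"])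
qed

lemma S_finite:
  assumes "S_ring H S" shows "finite S"
proof -
  have "S \<subseteq> Pow (carrier H)" "finite (carrier H)" using assms unfolding S_ring_def by auto
  then show ?thesis by (meson finite_Pow_iff finite_subset)
qed

lemma span_conv_left:
  assumes "S_ring H S" "in_span S f" "T \<in> S"
  shows "in_span S (conv H f (ind T))"
proof -
  obtain c where c: "f = (\<lambda>x. \<Sum>U\<in>S. c U * ind U x)" using assms(2) unfolding in_span_def by blast
  have fin: "finite S" using S_finite[OF assms(1)] .
  have "conv H f (ind T) = (\<lambda>x. \<Sum>U\<in>S. c U * conv H (ind U) (ind T) x)"
    unfolding c by (rule conv_sum_left[OF fin])
  moreover have "in_span S (\<lambda>x. \<Sum>U\<in>S. c U * conv H (ind U) (ind T) x)"
  proof (rule span_lincomb[OF fin fin], rule ballI)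
    fix U assume "U \<in> S"
    have "\<forall>T1\<in>S. \<forall>T2\<in>S. in_span S (conv H (ind T1) (ind T2))" using assms(1) unfolding S_ring_def by blast
    then show "in_span S (conv H (ind U) (ind T))" using \<open>U \<in> S\<close> assms(3) by blast
  qed
  ultimately show ?thesis by simp
qed

lemma const_count:
  fixes H (structure)
  assumes "S_ring H S" "A_subgroup H S K" "T \<in> S" "x \<in> T" "y \<in> T"
  shows "card (T \<inter> (K #> x)) = card (T \<inter> (K #> y))"
proof -
  have SR: "group H" "finite (carrier H)" "T \<subseteq> carrier H" "K \<in> S \<longrightarrow> True"
    using assms(1,3) unfolding S_ring_def by auto
  have sg: "subgroup K H" "in_span S (ind K)" using assms(2) unfolding A_subgroup_def by auto
  have Ksub: "K \<subseteq> carrier H" using sg subgroup.subset by blast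
  have sp: "in_span S (conv H (ind K) (ind T))"
    using span_conv_left[OF assms(1) sg(2) assms(3)] .
  have "in_span S (conv H (ind K) (ind T))" using sp .
  have "conv H (ind K) (ind T) x = conv H (ind K) (ind T) y"
    using span_const[OF assms(1) sp assms(3,4,5)] .
  moreover have "\<And>z. z \<in> T \<Longrightarrow> conv H (ind K) (ind T) z = of_nat (card (T \<inter> (K #> z)))"
  proof -
    fix z assume "z \<in> T"
    then have zc: "z \<in> carrier H" using SR by auto
    show "conv H (ind K) (ind T) z = of_nat (card (T \<inter> (K #> z)))"
      using conv_card[OF SR(1,2) Ksub SR(3) zc] card_rcos_count[OF SR(1) sg(1) SR(3) zc] by simp
  qed
  ultimately show ?thesis using assms(4,5) by simp
qed

lemma partition_count:
  fixes H (structure)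
  assumes "group H" "subgroup K H" "T \<subseteq> carrier H" "finite T"
    "\<forall>x\<in>T. card (T \<inter> (K #> x)) = c"
  shows "c * card ((\<lambda>t. T \<inter> (K #> t)) ` T) = card T"
proof -
  interpret group H by fact
  have U: "\<Union>((\<lambda>t. T \<inter> (K #> t)) ` T) = T"
    using assms(2,3) rcos_self by blast
  have "c * card ((\<lambda>t. T \<inter> (K #> t)) ` T) = card (\<Union>((\<lambda>t. T \<inter> (K #> t)) ` T))"
  proof (rule card_partition)
    show "finite ((\<lambda>t. T \<inter> (K #> t)) ` T)" using assms(4) by simp
    show "finite (\<Union>((\<lambda>t. T \<inter> (K #> t)) ` T))" using U assms(4) by simp
    show "\<And>d. d \<in> (\<lambda>t. T \<inter> (K #> t)) ` T \<Longrightarrow> card d = c" using assms(5) by auto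
    fix c1 c2 assume c1: "c1 \<in> (\<lambda>t. T \<inter> (K #> t)) ` T" and c2: "c2 \<in> (\<lambda>t. T \<inter> (K #> t)) ` T"
      and ne: "c1 \<noteq> c2"
    obtain t1 t2 where t: "t1 \<in> T" "t2 \<in> T" "c1 = T \<inter> (K #> t1)" "c2 = T \<inter> (K #> t2)"
      using c1 c2 by blast
    show "c1 \<inter> c2 = {}"
    proof (rule ccontr)
      assume "c1 \<inter> c2 \<noteq> {}"
      then obtain z where z: "z \<in> K #> t1" "z \<in> K #> t2" using t by blast
      have "K #> t1 = K #> z" using repr_independence[OF z(1)] t assms(2,3) by blast
      moreover have "K #> t2 = K #> z" using repr_independence[OF z(2)] t assms(2,3) by blast
      ultimately show False using ne t by simp
    qed
  qed
  then show ?thesis using U by simp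
qed

lemma union_basic:
  assumes "S_ring H S" "in_span S f" "T \<in> S" "x \<in> T" "f x \<noteq> 0" "y \<in> T"
  shows "f y \<noteq> 0"
  using span_const[OF assms(1,2,3,4,6)] assms(5) by simp

lemma thin_conv:
  fixes H (structure)
  assumes "group H" "finite (carrier H)" "a \<in> carrier H" "T \<subseteq> carrier H" "x \<in> carrier H"
  shows "(conv H (ind {a}) (ind T) x \<noteq> 0) = (x \<in> a <# T)"
proof -
  interpret group H by fact
  have "conv H (ind {a}) (ind T) x = of_nat (card {y\<in>{a}. inv y \<otimes> x \<in> T})"
    using conv_card[OF assms(1,2) _ assms(4,5)] assms(3) by simp
  then have e: "(conv H (ind {a}) (ind T) x \<noteq> 0) = (inv a \<otimes> x \<in> T)"
    by (cases "inv a \<otimes> x \<in> T") auto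
  have "(inv a \<otimes> x \<in> T) = (x \<in> a <# T)"
  proof
    assume "inv a \<otimes> x \<in> T"
    moreover have "x = a \<otimes> (inv a \<otimes> x)" using assms(3,5) by (simp add: m_assoc[symmetric])
    ultimately show "x \<in> a <# T" unfolding l_coset_def by blast
  next
    assume "x \<in> a <# T"
    then obtain t where "t \<in> T" "x = a \<otimes> t" unfolding l_coset_def by blast
    moreover have "inv a \<otimes> (a \<otimes> t) = t" using assms(3,4) \<open>t \<in> T\<close> by (simp add: m_assoc[symmetric] subsetD)
    ultimately show "inv a \<otimes> x \<in> T" by simp
  qed
  then show ?thesis using e by simp
qed

lemma thin_union:
  fixes H (structure)
  assumes "S_ring H S" "{a} \<in> S" "T \<in> S" "U \<in> S" "U \<inter> (a <# T) \<noteq> {}"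
  shows "U \<subseteq> a <# T"
proof -
  have SR: "group H" "finite (carrier H)" "T \<subseteq> carrier H" "U \<subseteq> carrier H" "a \<in> carrier H"
    using assms(1,2,3,4) unfolding S_ring_def by auto
  have "\<forall>T1\<in>S. \<forall>T2\<in>S. in_span S (conv H (ind T1) (ind T2))" using assms(1) unfolding S_ring_def by blast
  then have sp: "in_span S (conv H (ind {a}) (ind T))" using assms(2,3) by blast
  obtain x where x: "x \<in> U" "x \<in> a <# T" using assms(5) by blast
  show ?thesis
  proof
    fix y assume y: "y \<in> U"
    have "conv H (ind {a}) (ind T) x \<noteq> 0" using thin_conv[OF SR(1,2,5,3)] x SR(4) by blast
    then have "conv H (ind {a}) (ind T) y \<noteq> 0" using union_basic[OF assms(1) sp assms(4) x(1) _ y] by blast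
    then show "y \<in> a <# T" using thin_conv[OF SR(1,2,5,3)] y SR(4) by blast
  qed
qed

lemma thin_mult_set:
  fixes H (structure)
  assumes "S_ring H S" "{a} \<in> S" "T \<in> S"
  shows "a <# T \<in> S"
proof -
  have SR: "group H" "finite (carrier H)" "T \<subseteq> carrier H" "a \<in> carrier H" "T \<noteq> {}"
    "\<Union>S = carrier H" "\<forall>T\<in>S. T \<noteq> {} \<and> T \<subseteq> carrier H"
    "\<forall>T\<in>S. (\<lambda>x. inv x) ` T \<in> S"
    using assms(1,2,3) unfolding S_ring_def by auto
  interpret group H by fact
  obtain y where y: "y \<in> T" using SR(5) by blast
  have ay: "a \<otimes> y \<in> carrier H" using y SR by auto
  then obtain T' where T': "T' \<in> S" "a \<otimes> y \<in> T'" using SR(6) by blast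
  have ayT: "a \<otimes> y \<in> a <# T" using y unfolding l_coset_def by blast
  have sub1: "T' \<subseteq> a <# T" using thin_union[OF assms(1,2,3) T'(1)] T' ayT by blast
  have ia: "{inv a} \<in> S" using SR(8) assms(2) by force
  have "inv a \<otimes> (a \<otimes> y) = y" using y SR by (simp add: m_assoc[symmetric] subsetD)
  then have "y \<in> inv a <# T'" using T'(2) unfolding l_coset_def by force
  then have sub2: "T \<subseteq> inv a <# T'" using thin_union[OF assms(1) ia T'(1) assms(3)] y by blast
  have "a <# T \<subseteq> T'"
  proof
    fix z assume "z \<in> a <# T"
    then obtain t where t: "t \<in> T" "z = a \<otimes> t" unfolding l_coset_def by blast
    then obtain t' where t': "t' \<in> T'" "t = inv a \<otimes> t'" using sub2 unfolding l_coset_def by blast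
    have "t' \<in> carrier H" using t' T'(1) SR(7) by blast
    then have "z = t'" using t t' SR by (simp add: m_assoc[symmetric])
    then show "z \<in> T'" using t' by simp
  qed
  then have "a <# T = T'" using sub1 by blast
  then show ?thesis using T' by simp
qed

lemma thin_mult:
  fixes H (structure)
  assumes "S_ring H S" "{a} \<in> S" "{b} \<in> S"
  shows "{a \<otimes> b} \<in> S"
  using thin_mult_set[OF assms] unfolding l_coset_def by simp



lemma pp_cases:
  fixes p d k :: nat
  assumes "Factorial_Ring.prime p" "d dvd p ^ k" "d \<le> p"
  shows "d = 1 \<or> d = p"
proof -
  obtain m where m: "m \<le> k" "normalize d = p ^ m" using divides_primepow[OF assms(1,2)] by blast
  have d: "d = p ^ m" using m by simp
  have p2: "p \<ge> 2" using assms(1) prime_ge_2_nat by blast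
  show ?thesis
  proof (cases m)
    case 0 then show ?thesis using d by simp
  next
    case (Suc m')
    show ?thesis
    proof (cases m')
      case 0 then show ?thesis using d Suc by simp
    next
      case (Suc m'')
      have "p ^ m = p * p * p ^ m''" using \<open>m = Suc m'\<close> Suc by simp
      moreover have "p * p * p ^ m'' \<ge> p * 2 * 1"
        by (intro mult_mono) (use p2 in auto)
      ultimately show ?thesis using d assms(3) p2 by linarith
    qed
  qed
qed

lemma part1:
  fixes H (structure)
  assumes "p_S_ring H S p" "A_subgroup H S K" "card (carrier H) = p * card K" "T \<in> S"
  shows "\<exists>t0\<in>T. T \<subseteq> K #> t0"
proof -
  have SR: "S_ring H S" "Factorial_Ring.prime p" "\<exists>k. card T = p ^ k"
    using assms(1,4) unfolding p_S_ring_def by auto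
  have G: "group H" "finite (carrier H)" "T \<noteq> {}" "T \<subseteq> carrier H"
    using SR(1) assms(4) unfolding S_ring_def by auto
  interpret group H by fact
  have K: "subgroup K H" "in_span S (ind K)" using assms(2) unfolding A_subgroup_def by auto
  have Ksub: "K \<subseteq> carrier H" using K(1) subgroup.subset by blast
  have finT: "finite T" using G finite_subset by blast
  have p2: "p \<ge> 2" using SR(2) prime_ge_2_nat by blast
  have finK: "finite K" using G(2) Ksub finite_subset by blast
  have cK: "card K > 0" using finK K(1) subgroup.one_closed card_gt_0_iff by blast
  obtain t0 where t0: "t0 \<in> T" using G(3) by blast
  define c0 where "c0 = card (T \<inter> (K #> t0))"
  have cst: "\<forall>x\<in>T. card (T \<inter> (K #> x)) = c0"
    unfolding c0_def using const_count[OF SR(1) assms(2,4) _ t0] by blast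
  define C where "C = (\<lambda>t. T \<inter> (K #> t)) ` T"
  have part: "c0 * card C = card T" unfolding C_def using partition_count[OF G(1) K(1) G(4) finT cst] .
  obtain k where k: "card T = p ^ k" using SR(3) by blast
  have dvd: "card C dvd p ^ k" using part k by (metis dvd_triv_right)
  define D where "D = (\<lambda>t. K #> t) ` T"
  have CD: "C = (\<lambda>Z. T \<inter> Z) ` D" unfolding C_def D_def by auto
  have Dsub: "D \<subseteq> rcosets K" unfolding D_def using G(4) Ksub rcosetsI by blast
  have finR: "finite (rcosets K)"
    using G(2) unfolding RCOSETS_def by simp
  have cR: "card (rcosets K) = p"
    using lagrange[OF K(1)] assms(3) cK unfolding order_def by simp
  have CleD: "card C \<le> card D" unfolding CD by (rule card_image_le) (use finT D_def in simp)
  have Dle: "card D \<le> p" using card_mono[OF finR Dsub] cR by simp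
  have "card C = 1 \<or> card C = p" using pp_cases[OF SR(2) dvd] CleD Dle by linarith
  moreover have "card C \<noteq> p"
  proof
    assume "card C = p"
    then have "card D = p" using CleD Dle by linarith
    then have "D = rcosets K" using card_subset_eq[OF finR Dsub] cR by simp
    then have "K \<in> D" using subgroup.subgroup_in_rcosets[OF K(1) G(1)] by simp
    then obtain t where t: "t \<in> T" "K #> t = K" unfolding D_def by blast
    then have tK: "t \<in> K" using rcos_self[of t K] G(4) K(1) by blast
    have TK: "T \<subseteq> K"
    proof
      fix y assume "y \<in> T"
      have "ind K y = ind K t" using span_const[OF SR(1) K(2) assms(4) \<open>y \<in> T\<close> t(1)] .
      then show "y \<in> K" using tK by (simp add: ind_def split: if_splits)
    qed
    have allK: "\<forall>y\<in>T. K #> y = K" using TK G(4) coset_join2[OF _ K(1)] by blast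
    have "D = {K}" unfolding D_def using allK t(1) by force
    then have "card D = 1" by simp
    then show False using \<open>card D = p\<close> p2 by simp
  qed
  ultimately have c1: "card C = 1" by simp
  have "T \<subseteq> K #> t0"
  proof
    fix t assume t: "t \<in> T"
    have "T \<inter> (K #> t) \<in> C" "T \<inter> (K #> t0) \<in> C" using t t0 unfolding C_def by auto
    then have eq: "T \<inter> (K #> t) = T \<inter> (K #> t0)" using c1 by (metis card_1_singletonE singletonD)
    have "t \<in> K #> t" using rcos_self[OF _ K(1)] t G(4) by blast
    then show "t \<in> K #> t0" using eq t by blast
  qed
  then show ?thesis using t0 by blast
qed



lemma part2:
  fixes H (structure)
  assumes "p_S_ring H S p" "T \<in> S" "A_subgroup H S L" "card L = p" "normal L H" "\<not> L \<subseteq> rad H T"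
    and pp: "\<And>d k. d dvd p ^ k \<Longrightarrow> d \<le> p \<Longrightarrow> d = 1 \<or> d = p"
    and h: "h \<in> T"
  shows "(h <# L) \<inter> T = {h} \<and> (L #> h) \<inter> T = {h}"
proof -
  have SR: "S_ring H S" "\<exists>k. card T = p ^ k"
    using assms(1,2) unfolding p_S_ring_def by auto
  have G: "group H" "finite (carrier H)" "T \<subseteq> carrier H"
    using SR(1) assms(2) unfolding S_ring_def by auto
  interpret group H by fact
  have L: "subgroup L H" using assms(3) unfolding A_subgroup_def by auto
  have Lsub: "L \<subseteq> carrier H" using L subgroup.subset by blast
  have finT: "finite T" using G finite_subset by blast
  have hc: "h \<in> carrier H" using h G by blast
  define d0 where "d0 = card (T \<inter> (L #> h))"
  have cst: "\<forall>x\<in>T. card (T \<inter> (L #> x)) = d0"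
    unfolding d0_def using const_count[OF SR(1) assms(3,2) _ h] by blast
  have part: "d0 * card ((\<lambda>t. T \<inter> (L #> t)) ` T) = card T"
    using partition_count[OF G(1) L G(3) finT cst] .
  obtain k where k: "card T = p ^ k" using SR(2) by blast
  have dvd: "d0 dvd p ^ k" using part k by (metis dvd_triv_left)
  have cL: "\<And>x. x \<in> carrier H \<Longrightarrow> card (L #> x) = p"
    using card_rcosets_equal[OF rcosetsI[OF Lsub] Lsub] assms(4) by simp
  have finL: "\<And>x. x \<in> carrier H \<Longrightarrow> finite (L #> x)"
    using G(2) r_coset_subset_G[OF Lsub] finite_subset by blast
  have dle: "d0 \<le> p" unfolding d0_def using card_mono[OF finL[OF hc], of "T \<inter> (L #> h)"] cL[OF hc] by simp
  have hin: "h \<in> L #> h" using rcos_self[OF hc L] .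
  have "d0 \<noteq> p"
  proof
    assume "d0 = p"
    have inc: "\<And>x. x \<in> T \<Longrightarrow> L #> x \<subseteq> T"
    proof -
      fix x assume x: "x \<in> T"
      then have xc: "x \<in> carrier H" using G by blast
      have "T \<inter> (L #> x) = L #> x"
        using card_subset_eq[OF finL[OF xc], of "T \<inter> (L #> x)"] cst x \<open>d0 = p\<close> cL[OF xc] by auto
      then show "L #> x \<subseteq> T" by blast
    qed
    have "L \<subseteq> rad H T"
    proof
      fix l assume l: "l \<in> L"
      have lc: "l \<in> carrier H" using l Lsub by blast
      have il: "inv l \<in> L" using subgroup.m_inv_closed[OF L l] .
      have ilc: "inv l \<in> carrier H" using lc by simp
      have ce: "\<And>x. x \<in> carrier H \<Longrightarrow> x <# L = L #> x" using normal.coset_eq[OF assms(5)] by simp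
      have "l <# T = T"
      proof
        show "l <# T \<subseteq> T"
        proof
          fix z assume "z \<in> l <# T"
          then obtain t where t: "t \<in> T" "z = l \<otimes> t" unfolding l_coset_def by blast
          have "l \<otimes> t \<in> L #> t" using rcosI[OF l Lsub] t G by blast
          then show "z \<in> T" using inc t by blast
        qed
        show "T \<subseteq> l <# T"
        proof
          fix t assume t: "t \<in> T"
          then have tc: "t \<in> carrier H" using G by blast
          have "inv l \<otimes> t \<in> L #> t" using rcosI[OF il Lsub tc] .
          then have "inv l \<otimes> t \<in> T" using inc t by blast
          moreover have "t = l \<otimes> (inv l \<otimes> t)" using lc tc by (simp add: m_assoc[symmetric])
          ultimately show "t \<in> l <# T" unfolding l_coset_def by blast
        qed
      qed
      moreover have "T #> l = T"
      proof
        show "T #> l \<subseteq> T"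
        proof
          fix z assume "z \<in> T #> l"
          then obtain t where t: "t \<in> T" "z = t \<otimes> l" unfolding r_coset_def by blast
          then have tc: "t \<in> carrier H" using G by blast
          have "t \<otimes> l \<in> t <# L" using l unfolding l_coset_def by blast
          then show "z \<in> T" using inc t ce[OF tc] by blast
        qed
        show "T \<subseteq> T #> l"
        proof
          fix t assume t: "t \<in> T"
          then have tc: "t \<in> carrier H" using G by blast
          have "t \<otimes> inv l \<in> t <# L" using il unfolding l_coset_def by blast
          then have "t \<otimes> inv l \<in> T" using inc t ce[OF tc] by blast
          moreover have "t = (t \<otimes> inv l) \<otimes> l" using lc tc by (simp add: m_assoc)
          ultimately show "t \<in> T #> l" unfolding r_coset_def by blast
        qed
      qed
      ultimately show "l \<in> rad H T" unfolding rad_def using lc by blast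
    qed
    then show False using assms(6) by blast
  qed
  then have "d0 = 1" using pp[OF dvd dle] by blast
  then have e: "T \<inter> (L #> h) = {h}" unfolding d0_def using h hin by (metis card_1_singletonE IntI singletonD)
  have "h <# L = L #> h" using normal.coset_eq[OF assms(5)] hc by simp
  then show ?thesis using e by blast
qed



lemma part3:
  fixes H (structure)
  assumes "p_S_ring H S p" "A_subgroup H S K" "card (carrier H) = p * card K" "T \<in> S"
    "comm_group H" "card (thin_radical H S \<inter> K) * card T > card (carrier H) div p"
    "t0 \<in> carrier H" "T \<subseteq> K #> t0"
  shows "thin_radical H S \<inter> rad H T \<noteq> {\<one>}"
proof
  assume O1: "thin_radical H S \<inter> rad H T = {\<one>}"
  have SR: "S_ring H S" "Factorial_Ring.prime p" using assms(1) unfolding p_S_ring_def by auto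
  have G: "group H" "finite (carrier H)" "T \<subseteq> carrier H" "\<forall>T\<in>S. (\<lambda>x. inv x) ` T \<in> S"
    "\<forall>T1\<in>S. \<forall>T2\<in>S. T1 \<noteq> T2 \<longrightarrow> T1 \<inter> T2 = {}"
    using SR(1) assms(4) unfolding S_ring_def by auto
  interpret comm_group H by fact
  have K: "subgroup K H" using assms(2) unfolding A_subgroup_def by auto
  have Ksub: "K \<subseteq> carrier H" using K subgroup.subset by blast
  have p0: "p > 0" using SR(2) prime_gt_0_nat by blast
  have divK: "card (carrier H) div p = card K" using assms(3) p0 by simp
  define Ot where "Ot = thin_radical H S \<inter> K"
  have Osub: "Ot \<subseteq> carrier H" unfolding Ot_def thin_radical_def by auto
  have finO: "finite Ot" using Osub G(2) finite_subset by blast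
  have lc_card: "\<And>a. a \<in> carrier H \<Longrightarrow> card (a <# T) = card T"
  proof -
    fix a assume a: "a \<in> carrier H"
    have "a <# T = (\<lambda>t. a \<otimes> t) ` T" unfolding l_coset_def by auto
    moreover have "inj_on (\<lambda>t. a \<otimes> t) T" using a G(3) by (auto simp: inj_on_def subsetD)
    ultimately show "card (a <# T) = card T" by (simp add: card_image)
  qed
  have inS: "\<And>a. a \<in> Ot \<Longrightarrow> a <# T \<in> S"
    using thin_mult_set[OF SR(1) _ assms(4)] unfolding Ot_def thin_radical_def by blast
  have inj: "inj_on (\<lambda>a. a <# T) Ot"
  proof
    fix a b assume a: "a \<in> Ot" and b: "b \<in> Ot" and e: "a <# T = b <# T"
    have ac: "a \<in> carrier H" and bc: "b \<in> carrier H" using a b Osub by auto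
    have sa: "{a} \<in> S" and sb: "{b} \<in> S" using a b unfolding Ot_def thin_radical_def by auto
    have "(\<lambda>x. inv x) ` {b} \<in> S" using G(4) sb by blast
    then have sib: "{inv b} \<in> S" by simp
    define d where "d = inv b \<otimes> a"
    have dc: "d \<in> carrier H" unfolding d_def using ac bc by simp
    have sd: "{d} \<in> S" unfolding d_def using thin_mult[OF SR(1) sib sa] .
    have "d <# T = inv b <# (a <# T)" unfolding d_def using lcos_m_assoc[OF G(3)] ac bc by simp
    also have "\<dots> = inv b <# (b <# T)" using e by simp
    also have "\<dots> = T" using lcos_m_assoc[OF G(3)] bc lcos_mult_one[OF G(3)] by simp
    finally have l: "d <# T = T" .
    have "T #> d = d <# T" unfolding l_coset_def r_coset_def using dc G(3) by (auto simp: m_comm subsetD)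
    then have "d \<in> rad H T" unfolding rad_def using l dc by simp
    moreover have "d \<in> thin_radical H S" unfolding thin_radical_def using dc sd by simp
    ultimately have "d = \<one>" using O1 by blast
    then have "b \<otimes> d = b" using bc by simp
    moreover have "b \<otimes> d = a" unfolding d_def using ac bc by (simp add: m_assoc[symmetric])
    ultimately show "a = b" by simp
  qed
  define F where "F = (\<lambda>a. a <# T) ` Ot"
  have finF: "finite F" unfolding F_def using finO by simp
  have Fsub: "\<Union>F \<subseteq> K #> t0"
  proof
    fix z assume "z \<in> \<Union>F"
    then obtain a t where at: "a \<in> Ot" "t \<in> T" "z = a \<otimes> t" unfolding F_def l_coset_def by blast
    obtain k where k: "k \<in> K" "t = k \<otimes> t0" using at(2) assms(8) unfolding r_coset_def by blast
    have aK: "a \<in> K" using at(1) unfolding Ot_def by simp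
    have "z = (a \<otimes> k) \<otimes> t0" using at k aK Ksub assms(7) by (simp add: m_assoc subsetD)
    moreover have "a \<otimes> k \<in> K" using subgroup.m_closed[OF K aK k(1)] .
    ultimately show "z \<in> K #> t0" unfolding r_coset_def by blast
  qed
  have finR: "finite (K #> t0)" using r_coset_subset_G[OF Ksub assms(7)] G(2) finite_subset by blast
  have cR: "card (K #> t0) = card K" using card_rcosets_equal[OF rcosetsI[OF Ksub assms(7)] Ksub] by simp
  have "card T * card F = card (\<Union>F)"
  proof (rule card_partition)
    show "finite F" by fact
    show "finite (\<Union>F)" using Fsub finR finite_subset by blast
    show "\<And>c. c \<in> F \<Longrightarrow> card c = card T" unfolding F_def using lc_card Osub by auto
    show "\<And>c1 c2. c1 \<in> F \<Longrightarrow> c2 \<in> F \<Longrightarrow> c1 \<noteq> c2 \<Longrightarrow> c1 \<inter> c2 = {}"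
      using G(5) inS unfolding F_def by blast
  qed
  also have "\<dots> \<le> card K" using card_mono[OF finR Fsub] cR by simp
  finally have "card T * card Ot \<le> card K" using card_image[OF inj] unfolding F_def by simp
  then show False using assms(6) divK unfolding Ot_def by (simp add: mult.commute)
qed


lemma main_all:
  fixes H (structure)
  assumes "p_S_ring H S p"
    and "A_subgroup H S K"
    and "card (carrier H) = p * card K"
    and "T \<in> S"
  shows "((\<exists>g\<in>carrier H. T \<subseteq> K #> g) \<and> rad H T \<subseteq> K) \<and>
         (\<forall>L. A_subgroup H S L \<and> card L = p \<and> normal L H \<and> \<not> L \<subseteq> rad H T \<longrightarrow>
            (\<forall>h\<in>T. (h <# L) \<inter> T = {h} \<and> (L #> h) \<inter> T = {h})) \<and>
         (comm_group H \<and>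
            card (thin_radical H S \<inter> K) * card T > card (carrier H) div p \<longrightarrow>
            thin_radical H S \<inter> rad H T \<noteq> {\<one>})"
proof -
  have SR: "S_ring H S" "Factorial_Ring.prime p" using assms(1) unfolding p_S_ring_def by auto
  have G: "group H" "T \<subseteq> carrier H" using SR(1) assms(4) unfolding S_ring_def by auto
  interpret group H by fact
  have K: "subgroup K H" using assms(2) unfolding A_subgroup_def by auto
  obtain t0 where t0: "t0 \<in> T" "T \<subseteq> K #> t0" using part1[OF assms] by blast
  have t0c: "t0 \<in> carrier H" using t0 G by blast
  have radK: "rad H T \<subseteq> K"
  proof
    fix h assume "h \<in> rad H T"
    then have hc: "h \<in> carrier H" and hT: "h <# T = T" unfolding rad_def by auto
    have "h \<otimes> t0 \<in> h <# T" using t0(1) unfolding l_coset_def by blast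
    then have "h \<otimes> t0 \<in> K #> t0" using hT t0(2) by blast
    then have "(h \<otimes> t0) \<otimes> inv t0 \<in> K" using subgroup.rcos_module_imp[OF K G(1) t0c] by blast
    then show "h \<in> K" using hc t0c by (simp add: m_assoc)
  qed
  have pp: "\<And>d k. d dvd p ^ k \<Longrightarrow> d \<le> p \<Longrightarrow> d = 1 \<or> d = p" using pp_cases[OF SR(2)] by blast
  show ?thesis
  proof (intro conjI allI impI ballI)
    show "\<exists>g\<in>carrier H. T \<subseteq> K #> g" using t0 t0c by blast
    show "rad H T \<subseteq> K" by fact
  next
    fix L h assume LL: "A_subgroup H S L \<and> card L = p \<and> normal L H \<and> \<not> L \<subseteq> rad H T" and hT: "h \<in> T"
    then have A: "A_subgroup H S L" "card L = p" "normal L H" "\<not> L \<subseteq> rad H T" by auto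
    have "(h <# L) \<inter> T = {h} \<and> (L #> h) \<inter> T = {h}" using part2[OF assms(1,4) A pp hT] .
    then show "(h <# L) \<inter> T = {h}" "(L #> h) \<inter> T = {h}" by auto
  next
    assume "comm_group H \<and> card (thin_radical H S \<inter> K) * card T > card (carrier H) div p"
    then show "thin_radical H S \<inter> rad H T \<noteq> {\<one>}"
      using part3[OF assms _ _ t0c t0(2)] by blast
  qed
qed


theorem lemma2p18:
  fixes H :: "('a, 'b) monoid_scheme" and S :: "'a set set" and p :: nat
    and K T :: "'a set"
  assumes "p_S_ring H S p"
    and "A_subgroup H S K"
    and "card (carrier H) = p * card K"
    and "T \<in> S"
  shows "((\<exists>g\<in>carrier H. T \<subseteq> K #>\<^bsub>H\<^esub> g) \<and> rad H T \<subseteq> K) \<and>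
         (\<forall>L. A_subgroup H S L \<and> card L = p \<and> normal L H \<and> \<not> L \<subseteq> rad H T \<longrightarrow>
            (\<forall>h\<in>T. (h <#\<^bsub>H\<^esub> L) \<inter> T = {h} \<and> (L #>\<^bsub>H\<^esub> h) \<inter> T = {h})) \<and>
         (comm_group H \<and>
            card (thin_radical H S \<inter> K) * card T > card (carrier H) div p \<longrightarrow>
            thin_radical H S \<inter> rad H T \<noteq> {\<one>\<^bsub>H\<^esub>})"
    using main_all[OF assms] .

end
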